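(* Let $\tau\mapsto\xi(\tau)$ describe the radial coordinate of a future-directed timelike observer with $\lim_{\tau\to\infty}\frac{d\xi}{d\tau}(\tau)=v_{obs,\infty}\in(0,1)$ (so $\xi(\tau)\to\infty$), and set $a(\varepsilon)=(\varepsilon^2-1)/(\varepsilon v_{obs,\infty})$. Let $\varepsilon>1$ and $0<v<\sqrt{\varepsilon^2-1}$, and for large $\xi$ put $\lambda(v,\xi)=\xi\sqrt{\frac{\varepsilon^2-v^2}{1-2/\xi}-1}$. Then $$\lim_{\tau\to\infty}\big[G_{\varepsilon,\lambda(v,\xi(\tau))}(\xi(\tau),\pi_{\xi-}(\xi(\tau)))-\tau\big]=-\infty,$$ $$\lim_{\tau\to\infty}\big[G_{\varepsilon,\lambda(v,\xi(\tau))}(\xi(\tau),\pi_{\xi+}(\xi(\tau)))-\tau\big]=\begin{cases}-\infty,&v<a(\varepsilon),\\+\infty,&v>a(\varepsilon).\end{cases}$$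
   Context: $U_\lambda(\xi)=(1-\tfrac2\xi)(1+\lambda^2/\xi^2)$. For $\varepsilon>1$, $\lambda_c(\varepsilon)$ is the value of $\lambda$ for which the local maximum of $U_\lambda$ equals $\varepsilon^2$. Note $\lambda(v,\xi)$ is chosen so that $\sqrt{\varepsilon^2-U_{\lambda(v,\xi)}(\xi)}=v$, and $\lambda(v,\xi)>\lambda_c(\varepsilon)$ for $\xi$ large. For $\lambda>\lambda_c(\varepsilon)$ let $\xi_0$ be the turning point, i.e. the root of $U_\lambda(\xi_0)=\varepsilon^2$ beyond the maximum of $U_\lambda$; for $\xi\ge\xi_0$ let $s(x)=\sqrt{\varepsilon^2-U_\lambda(x)}$, $\pi_{\xi\pm}(\xi)=(\tfrac2\xi\varepsilon\pm s(\xi))/(1-\tfrac2\xi)$, and $G_{\varepsilon,\lambda}(\xi,\pi_{\xi\pm}(\xi))=\int_{\xi_0}^{\xi}\frac{\frac2x s(x)\pm\varepsilon}{(1-\frac2x)s(x)}dx$ (the line integral of $\frac{\frac2\xi\pi_\xi+(1+\frac2\xi)\varepsilon}{(1-\frac2\xi)\pi_\xi-\frac2\xi\varepsilon}d\xi$ along the curve $(1-\tfrac2\xi)\pi_\xi^2-\tfrac4\xi\varepsilon\pi_\xi-(1+\tfrac2\xi)\varepsilon^2+1+\lambda^2/\xi^2=0$ from the turning point). *)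

theory Defs
  imports "HOL-Analysis.Analysis"
begin

definition U :: "real \<Rightarrow> real \<Rightarrow> real" where
  "U lam xi = (1 - 2 / xi) * (1 + lam\<^sup>2 / xi\<^sup>2)"

text \<open>Turning point xi_0: the root of U_lambda = eps^2 beyond the maximum of U_lambda,
  i.e. the largest root in (2, infinity) (U_lambda decreases after its maximum to a minimum
  below 1 and then increases to 1 < eps^2, so there is exactly one root beyond the maximum,
  and it is the largest one).\<close>
definition turning_point :: "real \<Rightarrow> real \<Rightarrow> real" where
  "turning_point eps lam = (GREATEST x. x > 2 \<and> U lam x = eps\<^sup>2)"

definition s_fun :: "real \<Rightarrow> real \<Rightarrow> real \<Rightarrow> real" where
  "s_fun eps lam x = sqrt (eps\<^sup>2 - U lam x)"

text \<open>pi_{xi,+-}(xi); sg = 1 gives the + branch, sg = -1 the - branch.\<close>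
definition pi_xi :: "real \<Rightarrow> real \<Rightarrow> real \<Rightarrow> real \<Rightarrow> real" where
  "pi_xi sg eps lam xi = (2 / xi * eps + sg * s_fun eps lam xi) / (1 - 2 / xi)"

text \<open>G_{eps,lambda}(xi, pi_{xi,+-}(xi)) as the (improper, absolutely convergent) integral
  from the turning point to xi; sg = 1 for pi_{xi+}, sg = -1 for pi_{xi-}.\<close>
definition G_branch :: "real \<Rightarrow> real \<Rightarrow> real \<Rightarrow> real \<Rightarrow> real" where
  "G_branch sg eps lam xi =
     integral {turning_point eps lam .. xi}
       (\<lambda>x. (2 / x * s_fun eps lam x + sg * eps) / ((1 - 2 / x) * s_fun eps lam x))"

definition lam_v :: "real \<Rightarrow> real \<Rightarrow> real \<Rightarrow> real" where
  "lam_v eps v xi = xi * sqrt ((eps\<^sup>2 - v\<^sup>2) / (1 - 2 / xi) - 1)"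

definition a_crit :: "real \<Rightarrow> real \<Rightarrow> real" where
  "a_crit eps vinf = (eps\<^sup>2 - 1) / (eps * vinf)"

end

theory Submission
  imports Defs "HOL-Computational_Algebra.Polynomial" "HOL-Real_Asymp.Real_Asymp"
begin


lemma S2_eq:
  fixes eps lam x :: real
  assumes "x \<noteq> 0"
  shows "eps\<^sup>2 - U lam x = ((eps\<^sup>2-1)*x^3 + 2*x^2 - lam^2*x + 2*lam^2) / x^3"
  using assms unfolding U_def by (simp add: field_simps power2_eq_square power3_eq_cube)

lemma tp_root:
  fixes eps lam X :: real
  assumes eps: "eps > 1" and lam: "lam > 0" and X: "X > 3" and aX: "(eps\<^sup>2-1)*X\<^sup>2 > lam\<^sup>2"
    and l3: "lam\<^sup>2 > 27*(eps\<^sup>2-1) + 18"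
  shows "3 < turning_point eps lam \<and> U lam (turning_point eps lam) = eps\<^sup>2"
proof -
  define a where "a = eps\<^sup>2 - 1"
  have a: "a > 0" using one_less_power[OF eps, of 2] unfolding a_def by simp
  define P where "P = (\<lambda>x::real. a*x^3 + 2*x^2 - lam^2*x + 2*lam^2)"
  have P3: "P 3 < 0" using l3 unfolding P_def a_def by simp
  have PX: "P X > 0"
  proof -
    have "P X = X*(a*X^2 - lam^2) + 2*X^2 + 2*lam^2" unfolding P_def by (simp add: algebra_simps power2_eq_square power3_eq_cube)
    moreover have "X*(a*X^2 - lam^2) > 0" using aX X unfolding a_def by simp
    ultimately show ?thesis by (smt (verit) zero_le_power2)
  qed
  have "\<exists>r\<ge>3. r \<le> X \<and> P r = 0"
    by (rule IVT') (use P3 PX X in \<open>auto simp: P_def intro!: continuous_intros\<close>)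
  then obtain r where r: "r \<ge> 3" "r \<le> X" "P r = 0" by blast
  have r3: "r > 3" using r P3 by (cases "r = 3") auto
  have eqU: "U lam x = eps\<^sup>2 \<longleftrightarrow> P x = 0" if "x > 2" for x
  proof -
    have "eps\<^sup>2 - U lam x = P x / x^3" using S2_eq[of x eps lam] that unfolding P_def a_def by simp
    then show ?thesis using that by auto
  qed
  define S where "S = {x. x > 2 \<and> U lam x = eps\<^sup>2}"
  have "S \<subseteq> {x. poly [:2*lam^2, -(lam^2), 2, a:] x = 0}"
    unfolding S_def using eqU by (auto simp: P_def algebra_simps power2_eq_square power3_eq_cube)
  moreover have "[:2*lam^2, -(lam^2), 2, a:] \<noteq> 0" using a by simp
  ultimately have fin: "finite S" using poly_roots_finite finite_subset by blast
  have rS: "r \<in> S" unfolding S_def using eqU r r3 by auto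
  have MS: "Max S \<in> S" "r \<le> Max S" using fin rS by (metis Max_in empty_iff, simp)
  have "turning_point eps lam = Max S"
    unfolding turning_point_def
  proof (rule Greatest_equality)
    show "Max S > 2 \<and> U lam (Max S) = eps\<^sup>2" using MS(1) unfolding S_def by auto
    show "y \<le> Max S" if "y > 2 \<and> U lam y = eps\<^sup>2" for y
      using that fin by (intro Max_ge) (auto simp: S_def)
  qed
  moreover note MS
  ultimately show ?thesis using r3 unfolding S_def by auto
qed

lemma alg_facts:
  fixes eps lam t a l B C c0 :: real
  assumes a_def: "a = eps\<^sup>2-1" and l_def: "l = lam / sqrt(3*a+2)" and B_def: "B = (a*l+2)/(l-2)"
    and C_def: "C = a + 2/l*(1+B)" and c0_def: "c0 = 1 - B/(a*l)"
  assumes eps: "eps > 1" and lam: "lam > 0" and l3: "l > 3" and t3: "t > 3"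
    and Pt: "a*t^3 + 2*t^2 - lam^2*t + 2*lam^2 = 0"
  shows "a*t^2 \<le> lam^2" "l \<le> t" "lam^2 \<le> B*t^2" "B > 0" "C > a" "a > 0"
    "\<And>x. x > t \<Longrightarrow> eps\<^sup>2 - U lam x \<ge> c0*a*(x^2-t^2)/x^2"
    "\<And>x. x \<ge> t \<Longrightarrow> eps\<^sup>2 - U lam x \<le> C - lam^2/x^2"
proof -
  have a: "a > 0" using one_less_power[OF eps, of 2] unfolding a_def by simp
  thus "a > 0" .
  define k where "k = sqrt(3*a+2)"
  have k: "k > 0" "k^2 = 3*a+2" using a unfolding k_def by auto
  have lamk: "lam = l*k" unfolding l_def k_def using k by (simp add: k_def)
  show i: "a*t^2 \<le> lam^2"
  proof -
    have "a*t^3 = lam^2*t - 2*lam^2 - 2*t^2" using Pt by simp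
    also have "\<dots> \<le> lam^2*t" by simp
    finally have "t*(a*t^2) \<le> t*lam^2" by (simp add: power3_eq_cube power2_eq_square algebra_simps)
    thus ?thesis using t3 by simp
  qed
  have ii: "lam^2*(t-2) = t^2*(a*t+2)" using Pt by (simp add: algebra_simps power2_eq_square power3_eq_cube)
  have iii: "lam^2 \<le> (3*a+2)*t^2"
  proof -
    have "a*t+2 \<le> (3*a+2)*(t-2)"
    proof -
      have "(3*a+2)*(t-2) - (a*t+2) = 2*(a+1)*(t-3)" by (simp add: algebra_simps)
      moreover have "2*(a+1)*(t-3) \<ge> 0" using a t3 by simp
      ultimately show ?thesis by simp
    qed
    hence "t^2*(a*t+2) \<le> t^2*((3*a+2)*(t-2))" by (simp add: mult_left_mono)
    hence "lam^2*(t-2) \<le> ((3*a+2)*t^2)*(t-2)" using ii by (simp add: algebra_simps)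
    thus ?thesis using t3 by simp
  qed
  show lt: "l \<le> t"
  proof -
    have e1: "(l*k)^2 = lam^2" using lamk by simp
    have e2: "(t*k)^2 = (3*a+2)*t^2" using k by (simp add: power_mult_distrib)
    have "(l*k)^2 \<le> (t*k)^2" unfolding e1 e2 using iii .
    moreover have "0 \<le> t*k" using t3 k by simp
    ultimately have "l*k \<le> t*k" by (rule power2_le_imp_le)
    thus ?thesis using k by simp
  qed
  show Bpos: "B > 0" unfolding B_def using a l3 by (intro divide_pos_pos add_pos_pos mult_pos_pos) auto
  show iv: "lam^2 \<le> B*t^2"
  proof -
    have "(a*t+2)*(l-2) \<le> (a*l+2)*(t-2)"
    proof -
      have "(a*l+2)*(t-2) - (a*t+2)*(l-2) = 2*(a+1)*(t-l)" by (simp add: algebra_simps)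
      moreover have "2*(a+1)*(t-l) \<ge> 0" using a lt by simp
      ultimately show ?thesis by simp
    qed
    hence "(a*t+2)/(t-2) \<le> B" unfolding B_def using l3 t3 by (simp add: divide_simps)
    moreover have "lam^2 = t^2*((a*t+2)/(t-2))" using ii t3 by (simp add: field_simps)
    ultimately have "lam^2 \<le> t^2*B" by (metis mult_left_mono zero_le_power2)
    thus ?thesis by (simp add: mult.commute)
  qed
  show "C > a" unfolding C_def using Bpos l3 by simp
  show "eps\<^sup>2 - U lam x \<le> C - lam^2/x^2" if x: "x \<ge> t" for x
  proof -
    have x0: "x > 0" using x t3 by simp
    have e: "eps\<^sup>2 - U lam x = a - lam^2/x^2 + 2/x + 2/x*(lam^2/x^2)"
      unfolding U_def a_def using x0 by (simp add: field_simps power2_eq_square power3_eq_cube)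
    have "lam^2/x^2 \<le> lam^2/t^2" using x t3 by (simp add: frac_le power_mono)
    also have "\<dots> \<le> B" using iv t3 by (simp add: divide_simps)
    finally have q: "lam^2/x^2 \<le> B" .
    have r: "2/x \<le> 2/l" using x lt l3 by (simp add: frac_le)
    have "2/x*(lam^2/x^2) \<le> 2/l*B" using q r x0 l3 by (intro mult_mono) auto
    thus ?thesis unfolding e C_def using r by (simp add: algebra_simps add_divide_distrib)
  qed
  show "eps\<^sup>2 - U lam x \<ge> c0*a*(x^2-t^2)/x^2" if x: "x > t" for x
  proof -
    have x0: "x > 0" using x t3 by simp
    define Q where "Q = a*(x^2+x*t+t^2) + 2*(x+t) - lam^2"
    have P0: "a*x^3 + 2*x^2 - lam^2*x + 2*lam^2 - (a*t^3 + 2*t^2 - lam^2*t + 2*lam^2) = (x-t)*Q"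
      unfolding Q_def power2_eq_square power3_eq_cube by algebra
    have P: "a*x^3 + 2*x^2 - lam^2*x + 2*lam^2 = (x-t)*Q" using P0 Pt by simp
    have lt1: "lam^2*t = a*t^3+2*t^2+2*lam^2" using Pt by linarith
    have lt2: "lam^2 = a*t^2 + 2*t + 2*lam^2/t"
    proof -
      have "lam^2 = (a*t^3+2*t^2+2*lam^2)/t" using lt1 t3 by (simp add: field_simps)
      also have "\<dots> = a*t^2 + 2*t + 2*lam^2/t" using t3 by (simp add: field_simps power2_eq_square power3_eq_cube)
      finally show ?thesis .
    qed
    have Q2: "Q = a*(x^2+x*t) + 2*x - 2*lam^2/t" unfolding Q_def using lt2 by (simp add: algebra_simps)
    have ca: "c0*a = a - B/l" unfolding c0_def using a l3 by (simp add: field_simps)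
    have "Q - c0*a*x*(x+t) = (B/l)*x*(x+t) + 2*x - 2*lam^2/t"
      unfolding Q2 ca by (simp add: algebra_simps power2_eq_square)
    moreover have "(B/l)*x*(x+t) \<ge> 2*B*x"
    proof -
      have "x + t \<ge> 2*l" using x lt by simp
      hence "(B/l)*x*(x+t) \<ge> (B/l)*x*(2*l)" using Bpos l3 x0 by (intro mult_left_mono) auto
      thus ?thesis using l3 by simp
    qed
    moreover have "2*lam^2/t \<le> 2*B*x"
    proof -
      have "lam^2/t \<le> B*t" using iv t3 by (simp add: divide_simps power2_eq_square)
      also have "\<dots> \<le> B*x" using Bpos x by simp
      finally show ?thesis by simp
    qed
    ultimately have Qge: "Q \<ge> c0*a*x*(x+t)" using x0 by linarith
    have "eps\<^sup>2 - U lam x = (x-t)*Q/x^3" using S2_eq[of x eps lam] x0 P unfolding a_def by simp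
    also have "\<dots> \<ge> (x-t)*(c0*a*x*(x+t))/x^3" using Qge x x0 by (intro divide_right_mono mult_left_mono) auto
    finally have "(x-t)*(c0*a*x*(x+t))/x^3 \<le> eps\<^sup>2 - U lam x" .
    moreover have "(x-t)*(c0*a*x*(x+t))/x^3 = c0*a*(x^2-t^2)/x^2"
      using x0 by (simp add: field_simps power2_eq_square power3_eq_cube)
    ultimately show ?thesis by simp
  qed
qed

lemma meas_f: "(\<lambda>x. (2/x * s_fun eps lam x + sg*eps)/((1-2/x)* s_fun eps lam x)) \<in> borel_measurable (lebesgue_on S)"
proof -
  have "(\<lambda>x. (2/x * s_fun eps lam x + sg*eps)/((1-2/x)* s_fun eps lam x)) \<in> borel_measurable borel"
    unfolding s_fun_def U_def by measurable
  thus ?thesis by (simp add: measurable_completion measurable_restrict_space1)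
qed


lemma main_bounds:
  fixes eps lam X a l B C c0 K1 :: real
  assumes a_def: "a = eps\<^sup>2-1" and l_def: "l = lam / sqrt(3*a+2)" and B_def: "B = (a*l+2)/(l-2)"
    and C_def: "C = a + 2/l*(1+B)" and c0_def: "c0 = 1 - B/(a*l)"
    and K1_def: "K1 = eps*l/((l-2) * sqrt(c0*a))"
  assumes eps: "eps > 1" and lam: "lam > 0" and X: "X > 3" and aX: "a*X\<^sup>2 > lam\<^sup>2"
    and l3: "l > 3" and c0: "c0 > 0"
  shows "G_branch 1 eps lam X \<le> 2*X/(l-2) + K1 * sqrt(X\<^sup>2 - lam\<^sup>2/B)"
    "G_branch 1 eps lam X \<ge> eps/C*(sqrt(C*X\<^sup>2-lam\<^sup>2) - lam * sqrt((C-a)/a))"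
    "G_branch (-1) eps lam X \<le> 2*X/(l-2)"
proof -
  define t where "t = turning_point eps lam"
  have a: "a > 0" using one_less_power[OF eps, of 2] unfolding a_def by simp
  have k: "sqrt(3*a+2) > 0" using a by simp
  have lam27: "lam\<^sup>2 > 27*(eps\<^sup>2-1) + 18"
  proof -
    have "lam = l * sqrt(3*a+2)" unfolding l_def using k by simp
    hence "lam\<^sup>2 = l\<^sup>2 * (3*a+2)" using a by (simp add: power_mult_distrib)
    moreover have "3*3 < l*l" using l3 by (intro mult_strict_mono) auto
    hence "9 < l\<^sup>2" by (simp add: power2_eq_square)
    hence "9*(3*a+2) < l\<^sup>2 * (3*a+2)" using a by (intro mult_strict_right_mono) auto
    ultimately have "lam\<^sup>2 > 9*(3*a+2)" by simp
    thus ?thesis unfolding a_def by simp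
  qed
  have tp: "3 < t" "U lam t = eps\<^sup>2"
    using tp_root[OF eps lam X _ lam27] aX unfolding t_def a_def by auto
  have Pt: "a*t^3 + 2*t^2 - lam^2*t + 2*lam^2 = 0"
  proof -
    have "0 = ((eps\<^sup>2-1)*t^3 + 2*t^2 - lam^2*t + 2*lam^2) / t^3" using S2_eq[of t eps lam] tp by simp
    thus ?thesis using tp unfolding a_def by simp
  qed
  note AF = alg_facts[OF a_def l_def B_def C_def c0_def eps lam l3 tp(1) Pt]
  have tX: "t < X"
  proof -
    have "a*t^2 < a*X^2" using AF(1) aX by simp
    hence "t^2 < X^2" using a by simp
    thus ?thesis using X tp by (smt (verit) power_mono)
  qed
  have lt: "l \<le> t" using AF(2) .
  have Bpos: "B > 0" using AF(4) .
  have Ca: "C > a" using AF(5) .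
  define s where "s = (\<lambda>x. s_fun eps lam x)"
  define f where "f = (\<lambda>sg x. (2/x * s_fun eps lam x + sg*eps)/((1-2/x) * s_fun eps lam x))"
  have Gf: "G_branch sg eps lam X = integral {t..X} (f sg)" for sg
    unfolding G_branch_def f_def t_def ..
  have st: "s t = 0" unfolding s_def s_fun_def using tp by simp
  have ft: "f sg t = 0" for sg unfolding f_def using st s_def by simp
  have s_low: "s x \<ge> sqrt(c0*a) * sqrt(x\<^sup>2-t\<^sup>2)/x" if "x > t" for x
  proof -
    have x0: "x > 0" using that tp by simp
    have "sqrt(c0*a*(x^2-t^2)/x^2) \<le> s x" unfolding s_def s_fun_def using AF(7)[OF that] by simp
    moreover have "sqrt(c0*a*(x^2-t^2)/x^2) = sqrt(c0*a) * sqrt(x\<^sup>2-t\<^sup>2)/x"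
      using x0 by (simp add: real_sqrt_mult real_sqrt_divide)
    ultimately show ?thesis by simp
  qed
  have s_pos: "s x > 0" if "x > t" for x
  proof -
    have x0: "x > 0" using that tp by simp
    have "t\<^sup>2 < x\<^sup>2" using that tp by (intro power_strict_mono) auto
    hence "x\<^sup>2 - t\<^sup>2 > 0" by simp
    hence "sqrt(c0*a) * sqrt(x\<^sup>2-t\<^sup>2)/x > 0" using c0 a x0 by simp
    thus ?thesis using s_low[OF that] by simp
  qed
  have Cx_pos: "C*x\<^sup>2 - lam\<^sup>2 > 0" if "x > t" for x
  proof -
    have x0: "x > 0" using that tp by simp
    have "0 < eps\<^sup>2 - U lam x" using s_pos[OF that] unfolding s_def s_fun_def by simp
    also have "\<dots> \<le> C - lam^2/x^2" using AF(8) that by simp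
    finally have "0 < (C - lam^2/x^2)*x^2" using x0 by simp
    thus ?thesis using x0 by (simp add: algebra_simps)
  qed
  have s_up: "s x \<le> sqrt(C*x\<^sup>2-lam\<^sup>2)/x" if "x \<ge> t" for x
  proof -
    have x0: "x > 0" using that tp by simp
    have "s x \<le> sqrt(C - lam^2/x^2)" unfolding s_def s_fun_def using AF(8)[OF that] by simp
    moreover have "C - lam^2/x^2 = (C*x\<^sup>2-lam\<^sup>2)/x^2" using x0 by (simp add: field_simps)
    ultimately show ?thesis using x0 by (simp add: real_sqrt_divide)
  qed
  have f_eq: "f sg x = 2/(x-2) + sg*eps*x/((x-2)* s x)" if "x > t" for x sg
  proof -
    have x2: "x > 2" using that tp by simp
    have "s x \<noteq> 0" using s_pos[OF that] by simp
    moreover have "x - 2 \<noteq> 0" "x \<noteq> 0" using x2 by auto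
    moreover have "1 - 2/x = (x-2)/x" using x2 by (simp add: field_simps)
    ultimately have nz: "x - 2 \<noteq> 0" "x \<noteq> 0" "s x \<noteq> 0" and e1: "1 - 2/x = (x-2)/x" by auto
    have n1: "2/x * s x + sg*eps = (2* s x + sg*eps*x)/x" using nz by (simp add: field_simps)
    have d1: "(x-2)/x * s x = ((x-2) * s x)/x" by simp
    have "f sg x = ((2* s x + sg*eps*x)/x)/(((x-2) * s x)/x)" unfolding f_def s_def[symmetric] e1 n1 d1 ..
    also have "\<dots> = (2* s x + sg*eps*x)/((x-2) * s x)" using nz by simp
    also have "\<dots> = 2/(x-2) + sg*eps*x/((x-2) * s x)" using nz by (simp add: add_divide_distrib)
    finally show ?thesis .
  qed
  define g where "g = (\<lambda>x. 2/(l-2) + K1*(x/sqrt(x\<^sup>2-t\<^sup>2)))"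
  have K1pos: "K1 > 0" unfolding K1_def using eps l3 c0 a by (intro divide_pos_pos mult_pos_pos) auto
  have g_nonneg: "g x \<ge> 0" if "x \<ge> t" for x
    unfolding g_def using K1pos l3 that tp by (intro add_nonneg_nonneg mult_nonneg_nonneg divide_nonneg_nonneg) auto
  have main_term: "eps*x/((x-2) * s x) \<le> K1*(x/sqrt(x\<^sup>2-t\<^sup>2))" if x: "x > t" for x
  proof -
    have x2: "x > 2" using x tp by simp
    have xt: "x\<^sup>2 - t\<^sup>2 > 0" using x tp by (smt (verit, best) power_strict_mono zero_less_numeral)
    define m where "m = sqrt(c0*a) * sqrt(x\<^sup>2-t\<^sup>2)/x"
    have m: "m > 0" unfolding m_def using c0 a xt x2 by simp
    have "eps*x/((x-2) * s x) \<le> eps*x/((x-2) * m)"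
      using s_low[OF x] m x2 eps unfolding m_def[symmetric] by (intro divide_left_mono mult_left_mono mult_pos_pos) auto
    also have "\<dots> = (eps/sqrt(c0*a)) * (x/(x-2)) * (x/sqrt(x\<^sup>2-t\<^sup>2))"
      unfolding m_def using x2 xt c0 a by (simp add: field_simps)
    also have "\<dots> \<le> (eps/sqrt(c0*a)) * (l/(l-2)) * (x/sqrt(x\<^sup>2-t\<^sup>2))"
    proof -
      have "x/(x-2) \<le> l/(l-2)" using lt x l3 x2 by (simp add: divide_simps) (simp add: algebra_simps)
      thus ?thesis using eps c0 a x2 xt by (intro mult_right_mono mult_left_mono) auto
    qed
    also have "\<dots> = K1*(x/sqrt(x\<^sup>2-t\<^sup>2))" unfolding K1_def by simp
    finally show ?thesis .
  qed
  have f_bound: "\<bar>f sg x\<bar> \<le> g x" if x: "x \<in> {t..X}" and sg: "\<bar>sg\<bar> = 1" for x sg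
  proof (cases "x = t")
    case True
    thus ?thesis using ft g_nonneg by simp
  next
    case False
    hence x: "x > t" using x by simp
    have x2: "x > 2" using x tp by simp
    have "\<bar>f sg x\<bar> \<le> \<bar>2/(x-2)\<bar> + \<bar>sg*eps*x/((x-2) * s x)\<bar>" unfolding f_eq[OF x] by (rule abs_triangle_ineq)
    also have "\<bar>sg*eps*x/((x-2) * s x)\<bar> = eps*x/((x-2) * s x)"
      using sg eps x2 s_pos[OF x] by (simp add: abs_mult)
    also have "\<bar>2/(x-2)\<bar> = 2/(x-2)" using x2 by simp
    also have "2/(x-2) \<le> 2/(l-2)" using x lt l3 by (intro divide_left_mono) auto
    finally show ?thesis using main_term[OF x] unfolding g_def by simp
  qed
  define F where "F = (\<lambda>x. 2*x/(l-2) + K1 * sqrt(x\<^sup>2-t\<^sup>2))"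
  have g_int: "(g has_integral (F X - F t)) {t..X}"
  proof (rule fundamental_theorem_of_calculus_interior)
    show "t \<le> X" using tX by simp
    show "continuous_on {t..X} F" unfolding F_def using l3 by (intro continuous_intros) auto
    show "(F has_vector_derivative g x) (at x)" if "x \<in> {t<..<X}" for x
    proof -
      have xt: "x\<^sup>2 - t\<^sup>2 > 0" using that tp by (smt (verit, best) greaterThanLessThan_iff power_strict_mono zero_less_numeral)
      have d1: "((\<lambda>x. 2*x/(l-2)) has_real_derivative 2/(l-2)) (at x)"
        by (rule DERIV_cdivide[OF DERIV_cmult_Id])
      have d2: "((\<lambda>x. sqrt(x\<^sup>2-t\<^sup>2)) has_real_derivative x/sqrt(x\<^sup>2-t\<^sup>2)) (at x)"
        using xt by (auto intro!: derivative_eq_intros simp: field_simps)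
      have "(F has_real_derivative (2/(l-2) + K1*(x/sqrt(x\<^sup>2-t\<^sup>2)))) (at x)"
        unfolding F_def by (intro DERIV_add d1 DERIV_cmult d2)
      moreover have "2/(l-2) + K1*(x/sqrt(x\<^sup>2-t\<^sup>2)) = g x" unfolding g_def ..
      ultimately show ?thesis by (simp add: has_real_derivative_iff_has_vector_derivative)
    qed
  qed
  have f_int: "f sg integrable_on {t..X}" if "\<bar>sg\<bar> = 1" for sg
  proof (rule measurable_bounded_by_integrable_imp_integrable_real)
    show "f sg \<in> borel_measurable (lebesgue_on {t..X})" unfolding f_def by (rule meas_f)
    show "g integrable_on {t..X}" using g_int by blast
    show "\<bar>f sg x\<bar> \<le> g x" if "x \<in> {t..X}" for x using f_bound that \<open>\<bar>sg\<bar> = 1\<close> by blast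
  qed auto
  have tpos: "t \<ge> 0" using tp by simp
  show "G_branch 1 eps lam X \<le> 2*X/(l-2) + K1 * sqrt(X\<^sup>2 - lam\<^sup>2/B)"
  proof -
    have "G_branch 1 eps lam X \<le> integral {t..X} g"
      unfolding Gf using f_int[of 1] g_int f_bound[of _ 1] by (intro integral_le) (auto, force)
    also have "\<dots> = 2*(X-t)/(l-2) + K1 * sqrt(X\<^sup>2-t\<^sup>2)" using g_int unfolding F_def by (simp add: integral_unique diff_divide_distrib)
    also have "\<dots> \<le> 2*X/(l-2) + K1 * sqrt(X\<^sup>2 - lam\<^sup>2/B)"
    proof -
      have "2*(X-t)/(l-2) \<le> 2*X/(l-2)" using tpos l3 by (intro divide_right_mono) auto
      moreover have "lam\<^sup>2/B \<le> t\<^sup>2" using AF(3) Bpos by (simp add: divide_simps mult.commute)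
      hence "sqrt(X\<^sup>2-t\<^sup>2) \<le> sqrt(X\<^sup>2 - lam\<^sup>2/B)" by simp
      ultimately show ?thesis using K1pos by (smt (verit) mult_left_mono)
    qed
    finally show ?thesis .
  qed
  show "G_branch (-1) eps lam X \<le> 2*X/(l-2)"
  proof -
    have "G_branch (-1) eps lam X \<le> integral {t..X} (\<lambda>x. 2/(l-2))"
    proof (unfold Gf, rule integral_le)
      show "f (-1) integrable_on {t..X}" using f_int[of "-1"] by simp
      show "(\<lambda>x. 2/(l-2)) integrable_on {t..X}" by (rule integrable_const_ivl)
      show "f (-1) x \<le> 2/(l-2)" if "x \<in> {t..X}" for x
      proof (cases "x = t")
        case True thus ?thesis using ft l3 by simp
      next
        case False
        hence x: "x > t" using that by simp
        have x2: "x > 2" using x tp by simp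
        have "f (-1) x = 2/(x-2) - eps*x/((x-2) * s x)" using f_eq[OF x, of "-1"] by simp
        also have "\<dots> \<le> 2/(x-2)" using eps x2 s_pos[OF x] by simp
        also have "2/(x-2) \<le> 2/(l-2)" using x lt l3 by (intro divide_left_mono) auto
        finally show ?thesis .
      qed
    qed
    also have "\<dots> = (X-t)*(2/(l-2))" using tX by simp
    also have "\<dots> \<le> X*(2/(l-2))" using tpos l3 by (intro mult_right_mono) auto
    finally show ?thesis by (simp add: mult.commute)
  qed
  have Cpos: "C > 0" using Ca a by simp
  have Ct: "C*t\<^sup>2 - lam\<^sup>2 \<ge> 0"
  proof -
    have "0 = eps\<^sup>2 - U lam t" using tp by simp
    also have "\<dots> \<le> C - lam^2/t^2" using AF(8)[of t] by simp
    finally have "0 \<le> (C - lam^2/t^2)*t^2" using tp by simp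
    thus ?thesis using tp by (simp add: algebra_simps)
  qed
  define H where "H = (\<lambda>x. eps/C * sqrt(C*x\<^sup>2-lam\<^sup>2))"
  define h where "h = (\<lambda>x. if x = t then 0 else eps*x/sqrt(C*x\<^sup>2-lam\<^sup>2))"
  have h_int0: "((\<lambda>x. eps*x/sqrt(C*x\<^sup>2-lam\<^sup>2)) has_integral (H X - H t)) {t..X}"
  proof (rule fundamental_theorem_of_calculus_interior)
    show "t \<le> X" using tX by simp
    show "continuous_on {t..X} H" unfolding H_def by (intro continuous_intros)
    show "(H has_vector_derivative (eps*x/sqrt(C*x\<^sup>2-lam\<^sup>2))) (at x)" if "x \<in> {t<..<X}" for x
    proof -
      have xp: "C*x\<^sup>2-lam\<^sup>2 > 0" using Cx_pos that by simp
      have "(H has_real_derivative (eps*x/sqrt(C*x\<^sup>2-lam\<^sup>2))) (at x)"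
        unfolding H_def using xp Cpos by (auto intro!: derivative_eq_intros simp: field_simps)
      thus ?thesis by (simp add: has_real_derivative_iff_has_vector_derivative)
    qed
  qed
  have h_int: "(h has_integral (H X - H t)) {t..X}"
    by (rule has_integral_spike[OF negligible_sing[of t] _ h_int0]) (simp add: h_def)
  have "H X - H t \<le> integral {t..X} h" using h_int by (simp add: integral_unique)
  also have "integral {t..X} h \<le> G_branch 1 eps lam X"
  proof (unfold Gf, rule integral_le)
    show "h integrable_on {t..X}" using h_int by blast
    show "f 1 integrable_on {t..X}" using f_int[of 1] by simp
    show "h x \<le> f 1 x" if "x \<in> {t..X}" for x
    proof (cases "x = t")
      case True thus ?thesis using ft by (simp add: h_def)
    next
      case False
      hence x: "x > t" using that by simp
      have x2: "x > 2" using x tp by simp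
      have sp: "s x > 0" using s_pos[OF x] .
      have xp: "C*x\<^sup>2-lam\<^sup>2 > 0" using Cx_pos x by simp
      have "h x = eps/(sqrt(C*x\<^sup>2-lam\<^sup>2)/x)" using False x2 by (simp add: h_def)
      also have "\<dots> \<le> eps / s x" using s_up[of x] x sp eps xp x2 by (intro divide_left_mono) auto
      also have "eps / s x \<le> eps*x/((x-2) * s x)"
      proof -
        have "eps / s x = eps*(x-2)/((x-2) * s x)" using x2 sp by simp
        also have "\<dots> \<le> eps*x/((x-2) * s x)" using x2 sp eps by (intro divide_right_mono mult_left_mono) auto
        finally show ?thesis .
      qed
      also have "\<dots> \<le> f 1 x" unfolding f_eq[OF x] using x2 by simp
      finally show ?thesis .
    qed
  qed
  finally have low: "H X - H t \<le> G_branch 1 eps lam X" .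
  have "sqrt(C*t\<^sup>2-lam\<^sup>2) \<le> lam * sqrt((C-a)/a)"
  proof -
    have "C*t\<^sup>2-lam\<^sup>2 \<le> lam\<^sup>2*((C-a)/a)"
    proof -
      have "C*(a*t\<^sup>2) \<le> C*lam\<^sup>2" using AF(1) Cpos by simp
      thus ?thesis using a by (simp add: field_simps)
    qed
    hence "sqrt(C*t\<^sup>2-lam\<^sup>2) \<le> sqrt(lam\<^sup>2*((C-a)/a))" by simp
    also have "\<dots> = lam * sqrt((C-a)/a)" using lam by (simp only: real_sqrt_mult real_sqrt_abs2) simp
    finally show ?thesis .
  qed
  hence "eps/C*(sqrt(C*X\<^sup>2-lam\<^sup>2) - lam * sqrt((C-a)/a)) \<le> eps/C*(sqrt(C*X\<^sup>2-lam\<^sup>2) - sqrt(C*t\<^sup>2-lam\<^sup>2))"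
    using eps Cpos by (intro mult_left_mono) auto
  also have "\<dots> = H X - H t" unfolding H_def by (simp add: right_diff_distrib)
  finally have "eps/C*(sqrt(C*X\<^sup>2-lam\<^sup>2) - lam * sqrt((C-a)/a)) \<le> H X - H t" .
  thus "G_branch 1 eps lam X \<ge> eps/C*(sqrt(C*X\<^sup>2-lam\<^sup>2) - lam * sqrt((C-a)/a))" using low by simp
qed


lemma asym:
  fixes eps v a p k :: real and lamf :: "real \<Rightarrow> real"
  assumes "eps > 0" "v > 0" "a > 0" "p > 1" "k > 0" "v^2 = a + 1 - p"
  assumes lamf_def: "lamf = (\<lambda>X::real. X * sqrt (p / (1 - 2 / X) - 1))"
  shows "eventually (\<lambda>X. lamf X > 0) at_top"
    "eventually (\<lambda>X. a*X\<^sup>2 > (lamf X)\<^sup>2) at_top"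
    "eventually (\<lambda>X. lamf X / k > 3) at_top"
    "eventually (\<lambda>X. let l = lamf X / k; B = (a*l+2)/(l-2) in 1 - B/(a*l) > 0) at_top"
    "((\<lambda>X. let lam = lamf X; l = lam / k; B = (a*l+2)/(l-2); C = a + 2/l*(1+B)
        in eps/C*(sqrt(C*X\<^sup>2-lam\<^sup>2) - lam * sqrt((C-a)/a)) / X) \<longlongrightarrow> eps * v / a) at_top"
    "((\<lambda>X. let lam = lamf X; l = lam / k in 2*X/(l-2) / X) \<longlongrightarrow> 0) at_top"
    "((\<lambda>X. let lam = lamf X;
     l = lam / k; B = (a*l+2)/(l-2); c0 = 1 - B/(a*l);
     K1 = eps*l/((l-2) * sqrt(c0*a)) in (2*X/(l-2) + K1 * sqrt(X^2 - lam^2/B)) / X)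
     \<longlongrightarrow> eps * v / a) at_top"
proof -
  have v: "v = sqrt (a + 1 - p)" using assms by (metis real_sqrt_unique less_imp_le)
  have ap: "a + 1 - p > 0" using assms by (metis zero_less_power)
  have sp: "sqrt (p - 1) > 0" "inverse (sqrt (p - 1)) > 0" using assms by auto
  have cancel: "sqrt (p - 1) * inverse k * (inverse (sqrt (p - 1)) * k) = 1" using assms sp by (simp add: field_simps)
  have cancel2: "a * (sqrt (p - 1) * inverse k) * (inverse (sqrt (p - 1)) * k) = a" using assms sp by (simp add: field_simps)
  have a1: "0 < 1 + a" using assms by simp
  have eq3: "a - (p - 1) = a + 1 - p" by simp
  show "eventually (\<lambda>X. lamf X > 0) at_top" unfolding lamf_def using assms by real_asymp
  have e: "((p - 1) powr (1 / 2))\<^sup>2 = p - 1" using assms ap by (simp add: powr_half_sqrt)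
  have e': "p - 1 - a < 0" "p - 1 < a" using ap by auto
  show "eventually (\<lambda>X. a*X\<^sup>2 > (lamf X)\<^sup>2) at_top" unfolding lamf_def using assms ap by (real_asymp (verbose) simp add: e e')
  show "eventually (\<lambda>X. lamf X / k > 3) at_top" unfolding lamf_def using assms by real_asymp
  show "eventually (\<lambda>X. let l = lamf X / k; B = (a*l+2)/(l-2) in 1 - B/(a*l) > 0) at_top"
    unfolding lamf_def Let_def using assms by real_asymp
  show "((\<lambda>X. let lam = lamf X; l = lam / k in 2*X/(l-2) / X) \<longlongrightarrow> 0) at_top"
    unfolding lamf_def Let_def using assms by real_asymp
  have "((\<lambda>X. let lam = lamf X; l = lam / k; B = (a*l+2)/(l-2); C = a + 2/l*(1+B)
        in eps/C*(sqrt(C*X\<^sup>2-lam\<^sup>2) - lam * sqrt((C-a)/a)) / X) \<longlongrightarrow> eps * inverse a * sqrt(a+1-p)) at_top"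
    unfolding lamf_def Let_def using assms ap sp by (real_asymp simp add: powr_half_sqrt cancel cancel2 a1 e eq3)
  moreover have "eps * inverse a * sqrt(a+1-p) = eps * v / a" unfolding v by (simp add: divide_inverse)
  ultimately show "((\<lambda>X. let lam = lamf X; l = lam / k; B = (a*l+2)/(l-2); C = a + 2/l*(1+B)
        in eps/C*(sqrt(C*X\<^sup>2-lam\<^sup>2) - lam * sqrt((C-a)/a)) / X) \<longlongrightarrow> eps * v / a) at_top" by simp
  have e1: "1 - (p - 1) * (inverse a * (inverse (sqrt (p - 1)) * k) * (sqrt (p - 1) * inverse k)) = (a+1-p)/a"
    using assms by (simp add: field_simps)
  have e2: "1 - ((p - 1) powr (1 / 2))\<^sup>2 * (inverse a * (inverse ((p - 1) powr (1 / 2)) * k) * ((p - 1) powr (1 / 2) * inverse k)) = (a+1-p)/a"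
    using e1 assms by (simp add: powr_half_sqrt)
  have e3: "eps * ((p - 1) powr (1 / 2) * inverse k) * (inverse ((p - 1) powr (1 / 2)) * k * inverse (a powr (1 / 2))) = eps * inverse (a powr (1/2))"
    using assms by (simp add: field_simps)
  have T: "eps * inverse (a powr (1/2)) * ((a+1-p)/a) powr (1/2) = eps * v / a"
    using assms ap unfolding v by (simp add: powr_half_sqrt real_sqrt_divide field_simps)
  have "((\<lambda>X. let lam = lamf X;
     l = lam / k; B = (a*l+2)/(l-2); c0 = 1 - B/(a*l);
     K1 = eps*l/((l-2) * sqrt(c0*a)) in (2*X/(l-2) + K1 * sqrt(X^2 - lam^2/B)) / X)
     \<longlongrightarrow> eps * inverse (a powr (1/2)) * ((a+1-p)/a) powr (1/2)) at_top"
    using assms ap unfolding Let_def lamf_def by (real_asymp simp add: e1 e2 e3)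
  thus "((\<lambda>X. let lam = lamf X;
     l = lam / k; B = (a*l+2)/(l-2); c0 = 1 - B/(a*l);
     K1 = eps*l/((l-2) * sqrt(c0*a)) in (2*X/(l-2) + K1 * sqrt(X^2 - lam^2/B)) / X)
     \<longlongrightarrow> eps * v / a) at_top" using T by simp
qed


theorem lemma5:
  fixes xi xi' :: "real \<Rightarrow> real" and vinf eps v :: real
  assumes deriv: "\<forall>\<^sub>F \<tau> in at_top. (xi has_real_derivative xi' \<tau>) (at \<tau>)"
    and vlim: "(xi' \<longlongrightarrow> vinf) at_top"
    and vinf: "0 < vinf" "vinf < 1"
    and eps: "eps > 1"
    and v: "0 < v" "v < sqrt (eps\<^sup>2 - 1)"
  shows "filterlim (\<lambda>\<tau>. G_branch (-1) eps (lam_v eps v (xi \<tau>)) (xi \<tau>) - \<tau>) at_bot at_top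
         \<and> (v < a_crit eps vinf \<longrightarrow>
              filterlim (\<lambda>\<tau>. G_branch 1 eps (lam_v eps v (xi \<tau>)) (xi \<tau>) - \<tau>) at_bot at_top)
         \<and> (v > a_crit eps vinf \<longrightarrow>
              filterlim (\<lambda>\<tau>. G_branch 1 eps (lam_v eps v (xi \<tau>)) (xi \<tau>) - \<tau>) at_top at_top)"
proof -
  define a where "a = eps\<^sup>2 - 1"
  define p where "p = eps\<^sup>2 - v\<^sup>2"
  define k where "k = sqrt (3*a+2)"
  define lamf where "lamf = (\<lambda>X::real. X * sqrt (p / (1 - 2 / X) - 1))"
  have a: "a > 0" using one_less_power[OF eps, of 2] unfolding a_def by simp
  have v2: "v\<^sup>2 < a"
  proof -
    have "v\<^sup>2 < (sqrt (eps\<^sup>2 - 1))\<^sup>2" using v by (intro power_strict_mono) auto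
    thus ?thesis using a unfolding a_def by simp
  qed
  have p1: "p > 1" using v2 unfolding p_def a_def by simp
  have k: "k > 0" unfolding k_def using a by simp
  have vp: "v\<^sup>2 = a + 1 - p" unfolding a_def p_def by simp
  have epos: "eps > 0" using eps by simp
  note AS = asym[OF epos v(1) a p1 k vp lamf_def]
  have lamv: "lam_v eps v X = lamf X" for X unfolding lam_v_def lamf_def p_def ..
  define G1 where "G1 = (\<lambda>X. G_branch 1 eps (lamf X) X)"
  define Gm where "Gm = (\<lambda>X. G_branch (-1) eps (lamf X) X)"
  define Up where "Up = (\<lambda>X. let lam = lamf X;
     l = lam / k; B = (a*l+2)/(l-2); c0 = 1 - B/(a*l);
     K1 = eps*l/((l-2) * sqrt(c0*a)) in (2*X/(l-2) + K1 * sqrt(X^2 - lam^2/B)) / X)"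
  define Lo where "Lo = (\<lambda>X. let lam = lamf X; l = lam / k; B = (a*l+2)/(l-2); C = a + 2/l*(1+B)
        in eps/C*(sqrt(C*X\<^sup>2-lam\<^sup>2) - lam * sqrt((C-a)/a)) / X)"
  define Mn where "Mn = (\<lambda>X. let lam = lamf X; l = lam / k in 2*X/(l-2) / X)"
  have ev: "eventually (\<lambda>X. Lo X \<le> G1 X / X \<and> G1 X / X \<le> Up X \<and> Gm X / X \<le> Mn X) at_top"
    using AS(1-4) eventually_gt_at_top[of 3]
  proof eventually_elim
    case (elim X)
    let ?lam = "lamf X"
    let ?l = "?lam / sqrt(3*a+2)"
    have l3: "?l > 3" using elim unfolding k_def by simp
    have c0: "1 - ((a*?l+2)/(?l-2))/(a*?l) > 0" using elim unfolding k_def Let_def by simp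
    have aX: "a*X\<^sup>2 > ?lam\<^sup>2" using elim by simp
    note MB = main_bounds[OF refl refl refl refl refl refl eps elim(1) elim(5), folded a_def, OF aX l3 c0]
    have X0: "X > 0" using elim by simp
    show ?case
      using divide_right_mono[OF MB(1), of X] divide_right_mono[OF MB(2), of X] divide_right_mono[OF MB(3), of X] X0
      unfolding G1_def Gm_def Up_def Lo_def Mn_def Let_def k_def by simp
  qed
  define R where "R = eps * v / a"
  have limG1: "((\<lambda>X. G1 X / X) \<longlongrightarrow> R) at_top"
  proof (rule tendsto_sandwich[of Lo _ _ Up])
    show "eventually (\<lambda>X. Lo X \<le> G1 X / X) at_top" using ev by eventually_elim simp
    show "eventually (\<lambda>X. G1 X / X \<le> Up X) at_top" using ev by eventually_elim simp
    show "(Lo \<longlongrightarrow> R) at_top" using AS(5) unfolding Lo_def R_def .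
    show "(Up \<longlongrightarrow> R) at_top" using AS(7) unfolding Up_def R_def .
  qed
  have limMn: "(Mn \<longlongrightarrow> 0) at_top" using AS(6) unfolding Mn_def .
  have ratio: "((\<lambda>x. xi x / x) \<longlongrightarrow> vinf) at_top"
  proof (rule lhospital_at_top_at_top[of "\<lambda>x. x" "\<lambda>_. 1" xi xi'])
    show "filterlim (\<lambda>x::real. x) at_top at_top" by (rule filterlim_ident)
    show "eventually (\<lambda>x. (1::real) \<noteq> 0) at_top" by simp
    show "eventually (\<lambda>x. DERIV xi x :> xi' x) at_top" using deriv .
    show "eventually (\<lambda>x. DERIV (\<lambda>x. x) x :> 1) at_top" by (simp add: DERIV_ident)
    show "((\<lambda>x. xi' x / 1) \<longlongrightarrow> vinf) at_top" using vlim by simp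
  qed
  have xi_top: "filterlim xi at_top at_top"
  proof -
    have "filterlim (\<lambda>x. xi x / x * x) at_top at_top"
      by (rule filterlim_tendsto_pos_mult_at_top[OF ratio vinf(1) filterlim_ident])
    moreover have E: "eventually (\<lambda>x. xi x / x * x = xi x) at_top"
      using eventually_gt_at_top[of 0] by eventually_elim simp
    ultimately show ?thesis using filterlim_cong[OF refl refl E] by simp
  qed
  have xi_pos: "eventually (\<lambda>x. xi x > 0) at_top" using xi_top by (simp add: filterlim_at_top_dense)
  have c1: "((\<lambda>x. G1 (xi x) / xi x) \<longlongrightarrow> R) at_top" using filterlim_compose[OF limG1 xi_top] by simp
  have c2: "((\<lambda>x. Mn (xi x)) \<longlongrightarrow> 0) at_top" using filterlim_compose[OF limMn xi_top] by simp
  have phi: "((\<lambda>x. G1 (xi x) / xi x * (xi x / x) - 1) \<longlongrightarrow> R * vinf - 1) at_top"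
    by (intro tendsto_intros c1 ratio)
  have psi: "((\<lambda>x. Mn (xi x) * (xi x / x) - 1) \<longlongrightarrow> 0 * vinf - 1) at_top"
    by (intro tendsto_intros c2 ratio)
  have eq1: "eventually (\<lambda>x. (G1 (xi x) / xi x * (xi x / x) - 1) * x = G1 (xi x) - x) at_top"
    using xi_pos eventually_gt_at_top[of 0] by eventually_elim (simp add: field_simps)
  have le2: "eventually (\<lambda>x. Gm (xi x) - x \<le> (Mn (xi x) * (xi x / x) - 1) * x) at_top"
    using xi_pos eventually_gt_at_top[of 0] filterlim_compose[OF _ xi_top, of "\<lambda>X. Gm X / X \<le> Mn X"]
  proof -
    have ev2: "eventually (\<lambda>x. Gm (xi x) / xi x \<le> Mn (xi x)) at_top"
      using ev xi_top by (auto simp: filterlim_iff elim: eventually_mono)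
    show ?thesis using xi_pos eventually_gt_at_top[of 0] ev2
    proof eventually_elim
      case (elim x)
      have "Gm (xi x) = Gm (xi x) / xi x * (xi x / x) * x" using elim by simp
      also have "\<dots> \<le> Mn (xi x) * (xi x / x) * x"
        using elim by (intro mult_right_mono) (auto intro: mult_right_mono)
      finally show ?case by (simp add: algebra_simps)
    qed
  qed
  have bot1: "filterlim (\<lambda>x. (Mn (xi x) * (xi x / x) - 1) * x) at_bot at_top"
    by (rule filterlim_tendsto_neg_mult_at_bot[OF psi _ filterlim_ident]) simp
  have Gm_res: "filterlim (\<lambda>\<tau>. G_branch (-1) eps (lam_v eps v (xi \<tau>)) (xi \<tau>) - \<tau>) at_bot at_top"
    using filterlim_at_bot_mono[OF bot1 le2] unfolding Gm_def lamv .
  have acrit: "a_crit eps vinf = a / (eps * vinf)" unfolding a_crit_def a_def ..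
  have Rv: "R * vinf = eps * v * vinf / a" unfolding R_def by simp
  show ?thesis
  proof (intro conjI impI)
    show "filterlim (\<lambda>\<tau>. G_branch (-1) eps (lam_v eps v (xi \<tau>)) (xi \<tau>) - \<tau>) at_bot at_top" by (rule Gm_res)
  next
    assume "v < a_crit eps vinf"
    hence "v * (eps * vinf) < a" using epos vinf unfolding acrit by (simp add: field_simps)
    hence "R * vinf - 1 < 0" unfolding Rv using a by (simp add: field_simps)
    hence "filterlim (\<lambda>x. (G1 (xi x) / xi x * (xi x / x) - 1) * x) at_bot at_top"
      by (rule filterlim_tendsto_neg_mult_at_bot[OF phi _ filterlim_ident])
    hence "filterlim (\<lambda>x. G1 (xi x) - x) at_bot at_top" using filterlim_cong[OF refl refl eq1] by simp
    thus "filterlim (\<lambda>\<tau>. G_branch 1 eps (lam_v eps v (xi \<tau>)) (xi \<tau>) - \<tau>) at_bot at_top"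
      unfolding G1_def lamv .
  next
    assume "v > a_crit eps vinf"
    hence "v * (eps * vinf) > a" using epos vinf unfolding acrit by (simp add: field_simps)
    hence "R * vinf - 1 > 0" unfolding Rv using a by (simp add: field_simps)
    hence "filterlim (\<lambda>x. (G1 (xi x) / xi x * (xi x / x) - 1) * x) at_top at_top"
      by (rule filterlim_tendsto_pos_mult_at_top[OF phi _ filterlim_ident])
    hence "filterlim (\<lambda>x. G1 (xi x) - x) at_top at_top" using filterlim_cong[OF refl refl eq1] by simp
    thus "filterlim (\<lambda>\<tau>. G_branch 1 eps (lam_v eps v (xi \<tau>)) (xi \<tau>) - \<tau>) at_top at_top"
      unfolding G1_def lamv .
  qed
qed
end
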